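(* Let $a>0$, $b>0$, $\mu_1,\mu_2>0$, $\chi_1,\chi_2\ge0$ and $\lambda_1=\lambda_2=\lambda>0$. Let $c^*=c^*(\chi_1,\mu_1,\lambda,\chi_2,\mu_2,\lambda)$ be the quantity defined in the context. Then: (1) if $\chi_1\mu_1=\chi_2\mu_2$, then $c^*=2\sqrt a$ if $a\le\lambda$ and $c^*=\frac{a+\lambda}{\sqrt\lambda}$ if $a\ge\lambda$; (2) if $0<\chi_1\mu_1-\chi_2\mu_2<\frac b2$, then $\lim_{\chi_1\mu_1-\chi_2\mu_2\to0^+}c^*$ equals $2\sqrt a$ if $a\le\lambda$ and $\frac{a+\lambda}{\sqrt\lambda}$ if $a\ge\lambda$ (here $a,b,\lambda$ are fixed and $c^*$ depends on $\chi_1,\chi_2,\mu_1,\mu_2$ only through $\chi_1\mu_1-\chi_2\mu_2$); (3) if $\chi_1\mu_1<\chi_2\mu_2$, then $\lim_{\chi_2\mu_2-\chi_1\mu_1\to0^+}c^*$ equals $2\sqrt a$ if $a\le\lambda$ and $\frac{a+\lambda}{\sqrt\lambda}$ if $a\ge\lambda$.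
   Context: For general $\lambda_1,\lambda_2>0$ and $0<\mu<\min\{1,\sqrt{\lambda_1/a},\sqrt{\lambda_2/a}\}$ define $$\overline{L}_{\mu}=\min\Big\{\frac{\chi_1\mu_1\lambda_1(\lambda_1-\lambda_2)_+}{(\lambda_2-a\mu^2)(\lambda_1-a\mu^2)}+\frac{(\chi_2\mu_2\lambda_2-\chi_1\mu_1\lambda_1)_{+}}{\lambda_2-a\mu^2},\ \frac{\chi_2\mu_2\lambda_2(\lambda_1-\lambda_2)_+}{(\lambda_2-a\mu^2)(\lambda_1-a\mu^2)}+\frac{(\chi_2\mu_2\lambda_2-\chi_1\mu_1\lambda_1)_{+}}{\lambda_1-a\mu^2}\Big\},$$ $$K_{\mu}=\min\Big\{\tfrac{|\chi_2\mu_2-\chi_1\mu_1|(\sqrt{\lambda_2-a\mu^2}+\mu\sqrt a)}{\lambda_2-a\mu^2}+\Big|\tfrac{\chi_1\mu_1}{\sqrt{\lambda_1-a\mu^2}}-\tfrac{\chi_1\mu_1}{\sqrt{\lambda_2-a\mu^2}}\Big|+\tfrac{\mu\sqrt a\chi_1\mu_1|\lambda_1-\lambda_2|}{(\lambda_1-a\mu^2)(\lambda_2-a\mu^2)},\ \tfrac{|\chi_2\mu_2-\chi_1\mu_1|(\sqrt{\lambda_1-a\mu^2}+\mu\sqrt a)}{\lambda_1-a\mu^2}+\Big|\tfrac{\chi_2\mu_2}{\sqrt{\lambda_2-a\mu^2}}-\tfrac{\chi_2\mu_2}{\sqrt{\lambda_1-a\mu^2}}\Big|+\tfrac{\mu\sqrt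 a\chi_2\mu_2|\lambda_2-\lambda_1|}{(\lambda_2-a\mu^2)(\lambda_1-a\mu^2)}\Big\},$$ where $(r)_+=\max\{r,0\}$. Let $\mu^*=\sup\{\bar\mu\in(0,\min\{1,\sqrt{\lambda_1/a},\sqrt{\lambda_2/a}\}) : \mu\sqrt a K_\mu+\overline L_\mu\le b+\chi_2\mu_2-\chi_1\mu_1 \text{ for all } 0<\mu\le\bar\mu\}$ and $c^*(\chi_1,\mu_1,\lambda_1,\chi_2,\mu_2,\lambda_2)=\lim_{\mu\to\mu^{*-}}\sqrt a(\mu+\frac1\mu)$. *)

theory Defs
  imports Complex_Main
begin

definition pos_part :: "real \<Rightarrow> real" where
  "pos_part r = max r 0"

text \<open>The quantity bar L_mu. Arguments: a, chi1, mu1, lambda1, chi2, mu2, lambda2, mu.\<close>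
definition Lbar :: "real \<Rightarrow> real \<Rightarrow> real \<Rightarrow> real \<Rightarrow> real \<Rightarrow> real \<Rightarrow> real \<Rightarrow> real \<Rightarrow> real" where
  "Lbar a x1 m1 l1 x2 m2 l2 mu =
     min (x1 * m1 * l1 * pos_part (l1 - l2) / ((l2 - a * mu\<^sup>2) * (l1 - a * mu\<^sup>2))
            + pos_part (x2 * m2 * l2 - x1 * m1 * l1) / (l2 - a * mu\<^sup>2))
         (x2 * m2 * l2 * pos_part (l1 - l2) / ((l2 - a * mu\<^sup>2) * (l1 - a * mu\<^sup>2))
            + pos_part (x2 * m2 * l2 - x1 * m1 * l1) / (l1 - a * mu\<^sup>2))"

definition Kmu :: "real \<Rightarrow> real \<Rightarrow> real \<Rightarrow> real \<Rightarrow> real \<Rightarrow> real \<Rightarrow> real \<Rightarrow> real \<Rightarrow> real" where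
  "Kmu a x1 m1 l1 x2 m2 l2 mu =
     min (\<bar>x2 * m2 - x1 * m1\<bar> * (sqrt (l2 - a * mu\<^sup>2) + mu * sqrt a) / (l2 - a * mu\<^sup>2)
            + \<bar>x1 * m1 / sqrt (l1 - a * mu\<^sup>2) - x1 * m1 / sqrt (l2 - a * mu\<^sup>2)\<bar>
            + mu * sqrt a * x1 * m1 * \<bar>l1 - l2\<bar> / ((l1 - a * mu\<^sup>2) * (l2 - a * mu\<^sup>2)))
         (\<bar>x2 * m2 - x1 * m1\<bar> * (sqrt (l1 - a * mu\<^sup>2) + mu * sqrt a) / (l1 - a * mu\<^sup>2)
            + \<bar>x2 * m2 / sqrt (l2 - a * mu\<^sup>2) - x2 * m2 / sqrt (l1 - a * mu\<^sup>2)\<bar>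
            + mu * sqrt a * x2 * m2 * \<bar>l2 - l1\<bar> / ((l2 - a * mu\<^sup>2) * (l1 - a * mu\<^sup>2)))"

definition mustar :: "real \<Rightarrow> real \<Rightarrow> real \<Rightarrow> real \<Rightarrow> real \<Rightarrow> real \<Rightarrow> real \<Rightarrow> real \<Rightarrow> real" where
  "mustar a b x1 m1 l1 x2 m2 l2 =
     Sup {mb. 0 < mb \<and> mb < min 1 (min (sqrt (l1 / a)) (sqrt (l2 / a))) \<and>
              (\<forall>mu. 0 < mu \<and> mu \<le> mb \<longrightarrow>
                 mu * sqrt a * Kmu a x1 m1 l1 x2 m2 l2 mu + Lbar a x1 m1 l1 x2 m2 l2 mu
                   \<le> b + x2 * m2 - x1 * m1)}"

definition cstar :: "real \<Rightarrow> real \<Rightarrow> real \<Rightarrow> real \<Rightarrow> real \<Rightarrow> real \<Rightarrow> real \<Rightarrow> real \<Rightarrow> real" where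
  "cstar a b x1 m1 l1 x2 m2 l2 =
     Lim (at_left (mustar a b x1 m1 l1 x2 m2 l2)) (\<lambda>mu. sqrt a * (mu + 1 / mu))"

end

theory Submission imports Defs begin

lemma simpK: "Kmu a x1 m1 l x2 m2 l mu = \<bar>x2*m2 - x1*m1\<bar> * (sqrt (l - a*mu\<^sup>2) + mu*sqrt a) / (l - a*mu\<^sup>2)"
  unfolding Kmu_def by simp

lemma simpL: "l > 0 \<Longrightarrow> Lbar a x1 m1 l x2 m2 l mu = l * pos_part (x2*m2 - x1*m1) / (l - a*mu\<^sup>2)"
  unfolding Lbar_def pos_part_def
  by (simp add: right_diff_distrib[symmetric] mult.commute max_mult_distrib_left)

lemma cond_ok:
  fixes a b l d mu del :: real
  assumes a: "a > 0" and l: "l > 0" and mu: "0 < mu" and del: "0 < del" "del \<le> l - a*mu\<^sup>2"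
    and dd: "\<bar>d\<bar> * (3*l/del + 1) \<le> b"
  shows "mu * sqrt a * (\<bar>d\<bar> * (sqrt (l - a*mu\<^sup>2) + mu*sqrt a) / (l - a*mu\<^sup>2))
          + l * pos_part d / (l - a*mu\<^sup>2) \<le> b + d"
proof -
  define s2 where "s2 = l - a*mu\<^sup>2"
  have s2p: "s2 \<ge> del" using del s2_def by simp
  have s2l: "s2 \<le> l" using s2_def a by simp
  have s2pos: "s2 > 0" using s2p del by simp
  have m1: "mu * sqrt a \<le> sqrt l"
  proof -
    have "mu * sqrt a = sqrt (a*mu\<^sup>2)" using mu a by (simp add: real_sqrt_mult mult.commute)
    also have "\<dots> \<le> sqrt l" using s2pos s2_def by simp
    finally show ?thesis .
  qed
  have m2: "sqrt s2 \<le> sqrt l" using s2l by simp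
  have prod: "mu * sqrt a * (sqrt s2 + mu*sqrt a) \<le> 2*l"
  proof -
    have "mu * sqrt a * (sqrt s2 + mu*sqrt a) \<le> sqrt l * (sqrt l + sqrt l)"
      apply (rule mult_mono) apply (rule m1) apply (rule add_mono[OF m2 m1]) using mu a l s2pos by auto
    also have "\<dots> = 2*l" using l by simp
    finally show ?thesis .
  qed
  have t1: "mu * sqrt a * (\<bar>d\<bar> * (sqrt s2 + mu*sqrt a) / s2) \<le> \<bar>d\<bar> * (2*l) / del"
  proof -
    have "mu * sqrt a * (\<bar>d\<bar> * (sqrt s2 + mu*sqrt a) / s2) = \<bar>d\<bar> * (mu * sqrt a * (sqrt s2 + mu*sqrt a)) / s2"
      by simp
    also have "\<dots> \<le> \<bar>d\<bar> * (2*l) / s2"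
      using prod s2pos by (simp add: divide_right_mono mult_left_mono)
    also have "\<dots> \<le> \<bar>d\<bar> * (2*l) / del"
      using s2p del l by (simp add: frac_le)
    finally show ?thesis .
  qed
  have pp: "0 \<le> pos_part d" "pos_part d \<le> \<bar>d\<bar>" unfolding pos_part_def by auto
  have t2: "l * pos_part d / s2 \<le> l * \<bar>d\<bar> / del"
    using pp s2p del l s2pos by (simp add: frac_le mult_left_mono)
  have "\<bar>d\<bar> * (2*l) / del + l * \<bar>d\<bar> / del = \<bar>d\<bar> * (3*l/del)"
    by (simp add: field_simps)
  also have "\<dots> \<le> b - \<bar>d\<bar>" using dd by (simp add: algebra_simps)
  also have "\<dots> \<le> b + d" by simp
  finally show ?thesis using t1 t2 unfolding s2_def by linarith
qed

lemma ms_bounds: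
  fixes a b l e x1 m1 x2 m2 :: real
  defines "M \<equiv> min 1 (sqrt (l/a))"
  assumes a: "a > 0" and b: "b > 0" and l: "l > 0" and e: "0 < e" "e < M"
    and dd: "\<bar>x2*m2 - x1*m1\<bar> * (3*l/(l - a*(M-e)\<^sup>2) + 1) \<le> b"
  shows "M - e \<le> mustar a b x1 m1 l x2 m2 l \<and> mustar a b x1 m1 l x2 m2 l \<le> M"
proof -
  define S where "S = {mb. 0 < mb \<and> mb < M \<and>
              (\<forall>mu. 0 < mu \<and> mu \<le> mb \<longrightarrow>
                 mu * sqrt a * Kmu a x1 m1 l x2 m2 l mu + Lbar a x1 m1 l x2 m2 l mu
                   \<le> b + x2 * m2 - x1 * m1)}"
  have eq: "mustar a b x1 m1 l x2 m2 l = Sup S"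
    unfolding mustar_def S_def M_def by simp
  define del where "del = l - a*(M-e)\<^sup>2"
  have Mle: "M \<le> sqrt (l/a)" unfolding M_def by simp
  have "(M-e)\<^sup>2 < (sqrt (l/a))\<^sup>2"
    apply (rule power_strict_mono) using e Mle by auto
  hence "(M-e)\<^sup>2 < l/a" using l a by simp
  hence delp: "del > 0" unfolding del_def using a by (simp add: field_simps)
  have mem: "M - e \<in> S"
    unfolding S_def
  proof (intro CollectI conjI allI impI)
    show "0 < M - e" "M - e < M" using e by auto
    fix mu :: real assume mu: "0 < mu \<and> mu \<le> M - e"
    have "mu\<^sup>2 \<le> (M-e)\<^sup>2" apply (rule power_mono) using mu by auto
    hence dl: "del \<le> l - a*mu\<^sup>2" unfolding del_def using a by (simp add: mult_left_mono)
    have "mu * sqrt a * (\<bar>x2*m2 - x1*m1\<bar> * (sqrt (l - a*mu\<^sup>2) + mu*sqrt a) / (l - a*mu\<^sup>2))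
          + l * pos_part (x2*m2 - x1*m1) / (l - a*mu\<^sup>2) \<le> b + (x2*m2 - x1*m1)"
      apply (rule cond_ok[OF a l]) using mu delp dl dd unfolding del_def by auto
    thus "mu * sqrt a * Kmu a x1 m1 l x2 m2 l mu + Lbar a x1 m1 l x2 m2 l mu
                   \<le> b + x2 * m2 - x1 * m1"
      using simpK simpL[OF l] by simp
  qed
  have bdd: "bdd_above S" unfolding S_def bdd_above_def by (rule exI[of _ M]) auto
  have "M - e \<le> Sup S" by (rule cSup_upper[OF mem bdd])
  moreover have "Sup S \<le> M" apply (rule cSup_least) using mem apply blast unfolding S_def by auto
  ultimately show ?thesis using eq by simp
qed

lemma cstar_eq:
  assumes "mustar a b x1 m1 l x2 m2 l > 0"
  shows "cstar a b x1 m1 l x2 m2 l = sqrt a * (mustar a b x1 m1 l x2 m2 l + 1 / mustar a b x1 m1 l x2 m2 l)"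
  unfolding cstar_def
  apply (rule tendsto_Lim[OF trivial_limit_at_left_real])
  using assms by (intro tendsto_intros) auto

lemma ms_near:
  fixes a b l e :: real
  defines "M \<equiv> min 1 (sqrt (l/a))"
  assumes a: "a > 0" and b: "b > 0" and l: "l > 0" and e: "0 < e"
  shows "\<exists>r>0. \<forall>x1 m1 x2 m2. \<bar>x2*m2 - x1*m1\<bar> < r \<longrightarrow>
     \<bar>mustar a b x1 m1 l x2 m2 l - M\<bar> < e \<and> mustar a b x1 m1 l x2 m2 l \<ge> M/2"
proof -
  have Mp: "M > 0" unfolding M_def using a l by simp
  define e' where "e' = min (e/2) (M/2)"
  have e': "0 < e'" "e' < M" "e' < e" "e' \<le> M/2" unfolding e'_def using Mp e by auto
  define del where "del = l - a*(M-e')\<^sup>2"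
  have Mle: "M \<le> sqrt (l/a)" unfolding M_def by simp
  have "(M-e')\<^sup>2 < (sqrt (l/a))\<^sup>2"
    apply (rule power_strict_mono) using e' Mle by auto
  hence "(M-e')\<^sup>2 < l/a" using l a by simp
  hence delp: "del > 0" unfolding del_def using a by (simp add: field_simps)
  define r where "r = b / (3*l/del + 1)"
  have "3*l/del > 0" using l delp by simp
  hence den: "3*l/del + 1 > 0" by linarith
  have rp: "r > 0" unfolding r_def using b den by simp
  show ?thesis
  proof (intro exI[of _ r] conjI rp allI impI)
    fix x1 m1 x2 m2 :: real assume h: "\<bar>x2*m2 - x1*m1\<bar> < r"
    have "\<bar>x2*m2 - x1*m1\<bar> * (3*l/del + 1) \<le> b"
      using h den unfolding r_def by (simp add: pos_less_divide_eq less_imp_le)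
    hence "M - e' \<le> mustar a b x1 m1 l x2 m2 l \<and> mustar a b x1 m1 l x2 m2 l \<le> M"
      unfolding M_def del_def apply - apply (rule ms_bounds[OF a b l e'(1)]) using e'(2) unfolding M_def by auto
    thus "\<bar>mustar a b x1 m1 l x2 m2 l - M\<bar> < e" "mustar a b x1 m1 l x2 m2 l \<ge> M/2"
      using e' by auto
  qed
qed

lemma lim_gen:
  fixes a b l :: real and x1 m1 x2 m2 :: "'f \<Rightarrow> real"
  assumes a: "a > 0" and b: "b > 0" and l: "l > 0"
    and d: "((\<lambda>t. x2 t*m2 t - x1 t*m1 t) \<longlongrightarrow> 0) F"
  shows "((\<lambda>t. cstar a b (x1 t) (m1 t) l (x2 t) (m2 t) l) \<longlongrightarrow>
            sqrt a * (min 1 (sqrt (l/a)) + 1 / min 1 (sqrt (l/a)))) F"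
proof -
  define M where "M = min 1 (sqrt (l/a))"
  have Mp: "M > 0" unfolding M_def using a l by simp
  define ms where "ms = (\<lambda>t. mustar a b (x1 t) (m1 t) l (x2 t) (m2 t) l)"
  have ev: "\<forall>\<^sub>F t in F. \<bar>ms t - M\<bar> < e \<and> ms t \<ge> M/2" if e: "e > 0" for e
  proof -
    obtain r where r: "r > 0" and hr: "\<forall>x1 m1 x2 m2. \<bar>x2*m2 - x1*m1\<bar> < r \<longrightarrow>
     \<bar>mustar a b x1 m1 l x2 m2 l - M\<bar> < e \<and> mustar a b x1 m1 l x2 m2 l \<ge> M/2"
      using ms_near[OF a b l e] unfolding M_def by blast
    have "\<forall>\<^sub>F t in F. dist (x2 t*m2 t - x1 t*m1 t) 0 < r"
      using d r by (simp add: tendsto_iff)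
    thus ?thesis apply (rule eventually_mono) using hr unfolding ms_def by (simp add: dist_real_def)
  qed
  have lim: "(ms \<longlongrightarrow> M) F"
    unfolding tendsto_iff dist_real_def using ev by (metis (mono_tags, lifting) eventually_mono)
  have gl: "((\<lambda>t. sqrt a * (ms t + 1 / ms t)) \<longlongrightarrow> sqrt a * (M + 1/M)) F"
    using lim Mp by (intro tendsto_intros) auto
  have "\<forall>\<^sub>F t in F. sqrt a * (ms t + 1 / ms t) = cstar a b (x1 t) (m1 t) l (x2 t) (m2 t) l"
    using ev[OF zero_less_one]
  proof (rule eventually_mono)
    fix t assume "\<bar>ms t - M\<bar> < 1 \<and> ms t \<ge> M/2"
    hence "ms t > 0" using Mp by linarith
    thus "sqrt a * (ms t + 1 / ms t) = cstar a b (x1 t) (m1 t) l (x2 t) (m2 t) l"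
      unfolding ms_def by (rule cstar_eq[symmetric])
  qed
  from tendsto_cong[OF this] gl show ?thesis unfolding M_def by simp
qed

lemma val1: "a > 0 \<Longrightarrow> l > 0 \<Longrightarrow> a \<le> l \<Longrightarrow>
   sqrt a * (min 1 (sqrt (l/a)) + 1 / min 1 (sqrt (l/a))) = 2 * sqrt a"
  by (simp add: min_def)

lemma val2: "a > 0 \<Longrightarrow> l > 0 \<Longrightarrow> l \<le> a \<Longrightarrow>
   sqrt a * (min 1 (sqrt (l/a)) + 1 / min 1 (sqrt (l/a))) = (a + l) / sqrt l"
proof -
  assume a: "a > 0" and l: "l > 0" and la: "l \<le> a"
  have "sqrt (l/a) \<le> 1" using la a by simp
  hence m: "min 1 (sqrt (l/a)) = sqrt l / sqrt a" by (simp add: min_def real_sqrt_divide)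
  have "sqrt a * (sqrt l / sqrt a + 1 / (sqrt l / sqrt a)) = sqrt l + a / sqrt l"
    using a l by (simp add: field_simps)
  also have "\<dots> = (a + l) / sqrt l" using l by (simp add: field_simps)
  finally show ?thesis using m by simp
qed

lemma const_case:
  fixes a b l x1 m1 x2 m2 :: real
  assumes a: "a > 0" and b: "b > 0" and l: "l > 0" and eq: "x1 * m1 = x2 * m2"
  shows "cstar a b x1 m1 l x2 m2 l = sqrt a * (min 1 (sqrt (l/a)) + 1 / min 1 (sqrt (l/a)))"
proof -
  define M where "M = min 1 (sqrt (l/a))"
  have Mp: "M > 0" unfolding M_def using a l by simp
  have h: "\<bar>mustar a b x1 m1 l x2 m2 l - M\<bar> < e \<and> mustar a b x1 m1 l x2 m2 l \<ge> M/2" if ep: "e > 0" for e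
  proof -
    obtain r where "r > 0" and hr: "\<forall>x1 m1 x2 m2. \<bar>x2*m2 - x1*m1\<bar> < r \<longrightarrow>
     \<bar>mustar a b x1 m1 l x2 m2 l - M\<bar> < e \<and> mustar a b x1 m1 l x2 m2 l \<ge> M/2"
      using ms_near[OF a b l ep] unfolding M_def by blast
    thus ?thesis using eq by simp
  qed
  have "mustar a b x1 m1 l x2 m2 l = M"
  proof (rule ccontr)
    assume "mustar a b x1 m1 l x2 m2 l \<noteq> M"
    hence "\<bar>mustar a b x1 m1 l x2 m2 l - M\<bar> > 0" by simp
    from h[OF this] show False by simp
  qed
  thus ?thesis using cstar_eq[of a b x1 m1 l x2 m2] Mp unfolding M_def by simp
qed

theorem mainTheorem2:
  fixes a b l :: real
  assumes "a > 0" and "b > 0" and "l > 0"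
  shows
   "(\<forall>x1 m1 x2 m2 :: real. m1 > 0 \<longrightarrow> m2 > 0 \<longrightarrow> x1 \<ge> 0 \<longrightarrow> x2 \<ge> 0 \<longrightarrow>
        x1 * m1 = x2 * m2 \<longrightarrow>
        (a \<le> l \<longrightarrow> cstar a b x1 m1 l x2 m2 l = 2 * sqrt a) \<and>
        (a \<ge> l \<longrightarrow> cstar a b x1 m1 l x2 m2 l = (a + l) / sqrt l))
    \<and>
    (\<forall>(F :: 'f filter) (x1 :: 'f \<Rightarrow> real) m1 x2 m2.
        (\<forall>\<^sub>F t in F. m1 t > 0 \<and> m2 t > 0 \<and> x1 t \<ge> 0 \<and> x2 t \<ge> 0 \<and>
                      0 < x1 t * m1 t - x2 t * m2 t \<and> x1 t * m1 t - x2 t * m2 t < b / 2) \<longrightarrow>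
        ((\<lambda>t. x1 t * m1 t - x2 t * m2 t) \<longlongrightarrow> 0) F \<longrightarrow>
        (a \<le> l \<longrightarrow> ((\<lambda>t. cstar a b (x1 t) (m1 t) l (x2 t) (m2 t) l) \<longlongrightarrow> 2 * sqrt a) F) \<and>
        (a \<ge> l \<longrightarrow> ((\<lambda>t. cstar a b (x1 t) (m1 t) l (x2 t) (m2 t) l) \<longlongrightarrow> (a + l) / sqrt l) F))
    \<and>
    (\<forall>(F :: 'g filter) (x1 :: 'g \<Rightarrow> real) m1 x2 m2.
        (\<forall>\<^sub>F t in F. m1 t > 0 \<and> m2 t > 0 \<and> x1 t \<ge> 0 \<and> x2 t \<ge> 0 \<and>
                      x1 t * m1 t < x2 t * m2 t) \<longrightarrow>
        ((\<lambda>t. x2 t * m2 t - x1 t * m1 t) \<longlongrightarrow> 0) F \<longrightarrow>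
        (a \<le> l \<longrightarrow> ((\<lambda>t. cstar a b (x1 t) (m1 t) l (x2 t) (m2 t) l) \<longlongrightarrow> 2 * sqrt a) F) \<and>
        (a \<ge> l \<longrightarrow> ((\<lambda>t. cstar a b (x1 t) (m1 t) l (x2 t) (m2 t) l) \<longlongrightarrow> (a + l) / sqrt l) F))"
proof (intro conjI allI impI)
  fix x1 m1 x2 m2 :: real assume "x1 * m1 = x2 * m2"
  note c = const_case[OF assms this]
  show "a \<le> l \<Longrightarrow> cstar a b x1 m1 l x2 m2 l = 2 * sqrt a" using c val1 assms by (simp add: mult.commute)
  show "l \<le> a \<Longrightarrow> cstar a b x1 m1 l x2 m2 l = (a + l) / sqrt l" using c val2 assms by simp
next
  fix F :: "'f filter" and x1 m1 x2 m2 :: "'f \<Rightarrow> real"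
  assume "((\<lambda>t. x1 t * m1 t - x2 t * m2 t) \<longlongrightarrow> 0) F"
  from tendsto_minus[OF this] have "((\<lambda>t. x2 t * m2 t - x1 t * m1 t) \<longlongrightarrow> 0) F" by simp
  note c = lim_gen[OF assms this]
  show "a \<le> l \<Longrightarrow> ((\<lambda>t. cstar a b (x1 t) (m1 t) l (x2 t) (m2 t) l) \<longlongrightarrow> 2 * sqrt a) F"
    using c val1 assms by (simp add: mult.commute)
  show "l \<le> a \<Longrightarrow> ((\<lambda>t. cstar a b (x1 t) (m1 t) l (x2 t) (m2 t) l) \<longlongrightarrow> (a + l) / sqrt l) F"
    using c val2 assms by simp
next
  fix F :: "'g filter" and x1 m1 x2 m2 :: "'g \<Rightarrow> real"
  assume "((\<lambda>t. x2 t * m2 t - x1 t * m1 t) \<longlongrightarrow> 0) F"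
  note c = lim_gen[OF assms this]
  show "a \<le> l \<Longrightarrow> ((\<lambda>t. cstar a b (x1 t) (m1 t) l (x2 t) (m2 t) l) \<longlongrightarrow> 2 * sqrt a) F"
    using c val1 assms by (simp add: mult.commute)
  show "l \<le> a \<Longrightarrow> ((\<lambda>t. cstar a b (x1 t) (m1 t) l (x2 t) (m2 t) l) \<longlongrightarrow> (a + l) / sqrt l) F"
    using c val2 assms by simp
qed

end
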